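(* There exists an efficient, hence regret-free, strategy.
   Context: Let $\mathcal{X}$ be a finite set of alternatives. A proto-ranking is an irreflexive and transitive binary relation on $\mathcal{X}$; a ranking is a total proto-ranking; a tournament is a total and asymmetric binary relation on $\mathcal{X}$. The chair has a fixed preference $\succ$, a ranking on $\mathcal{X}$. Interaction: given a tournament $\mathrel{W}$, start from $R_0=\varnothing$; in each period with $R_{t-1}$ not total the chair offers a pair $\{x,y\}$ unranked by $R_{t-1}$, the winner is $x$ if $x\mathrel{W}y$ and $y$ otherwise, and $R_t$ is the transitive closure of $R_{t-1}\cup\{(\text{winner},\text{loser})\}$; stop when $R_t$ is total. A strategy assigns to each non-terminal history (sequence of (winner, loser) pairs) a pair unranked at it; its outcome under $\mathrel{W}$ is the final ranking. A ranking is $\mathrel{W}$-feasible if it is the outcome under $\mathrel{W}$ of some strategy. $R$ is more aligned with $\succ$ than $R'$ if for all $x\succ y$, $xR'y$ implies $xRy$. A ranking is $\mathrel{W}$-unimprovable if no other $\mathrel{W}$-feasible ranking is more aligned with $\succ$. A strategy is regret-free if for every tournament $\mathrel{W}$ its outcome under $\mathrel{W}$ is $\mathrel{W}$-unimprovable. A ranking $R$ is $\mathrel{W}$-efficient if $x\succ y$ and $x\mathrel{W}y$ imply $xRy$; a strategy is efficient if for every tournament $\mathrel{W}$ its outcome under $\mathrel{W}$ is $\mathrel{W}$-efficient. *)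

theory Defs
  imports Main
begin

definition proto_ranking :: "('a \<times> 'a) set \<Rightarrow> bool" where
  "proto_ranking R \<longleftrightarrow> irrefl R \<and> trans R"

definition ranking :: "('a \<times> 'a) set \<Rightarrow> bool" where
  "ranking R \<longleftrightarrow> proto_ranking R \<and> total R"

definition tournament :: "('a \<times> 'a) set \<Rightarrow> bool" where
  "tournament W \<longleftrightarrow> total W \<and> asym W"

text \<open>A history is a list of (winner, loser) pairs; its relation is obtained by
 repeatedly adding the pair and taking the transitive closure.\<close>

definition hist_rel :: "('a \<times> 'a) list \<Rightarrow> ('a \<times> 'a) set" where
  "hist_rel h = foldl (\<lambda>R p. trancl (insert p R)) {} h"

definition unranked :: "('a \<times> 'a) set \<Rightarrow> ('a \<times> 'a) \<Rightarrow> bool" where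
  "unranked R p \<longleftrightarrow> fst p \<noteq> snd p \<and> p \<notin> R \<and> (snd p, fst p) \<notin> R"

inductive valid_hist :: "('a \<times> 'a) list \<Rightarrow> bool" where
  Nil: "valid_hist []"
| step: "valid_hist h \<Longrightarrow> \<not> total (hist_rel h) \<Longrightarrow> unranked (hist_rel h) (x, y)
          \<Longrightarrow> valid_hist (h @ [(x, y)])"

text \<open>A strategy offers the pair {x,y}, represented by (x,y) (order irrelevant),
 which must be unranked at every non-terminal history.\<close>
definition is_strategy :: "(('a \<times> 'a) list \<Rightarrow> 'a \<times> 'a) \<Rightarrow> bool" where
  "is_strategy \<sigma> \<longleftrightarrow>
     (\<forall>h. valid_hist h \<longrightarrow> \<not> total (hist_rel h) \<longrightarrow> unranked (hist_rel h) (\<sigma> h))"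

definition winner_loser :: "('a \<times> 'a) set \<Rightarrow> 'a \<times> 'a \<Rightarrow> 'a \<times> 'a" where
  "winner_loser W p = (if p \<in> W then p else (snd p, fst p))"

fun play :: "(('a \<times> 'a) list \<Rightarrow> 'a \<times> 'a) \<Rightarrow> ('a \<times> 'a) set \<Rightarrow> nat \<Rightarrow> ('a \<times> 'a) list" where
  "play \<sigma> W 0 = []"
| "play \<sigma> W (Suc n) =
     (let h = play \<sigma> W n in
      if total (hist_rel h) then h else h @ [winner_loser W (\<sigma> h)])"

definition outcome :: "(('a \<times> 'a) list \<Rightarrow> 'a \<times> 'a) \<Rightarrow> ('a \<times> 'a) set \<Rightarrow> ('a \<times> 'a) set \<Rightarrow> bool" where
  "outcome \<sigma> W R \<longleftrightarrow> (\<exists>n. total (hist_rel (play \<sigma> W n)) \<and> R = hist_rel (play \<sigma> W n))"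

definition feasible :: "('a \<times> 'a) set \<Rightarrow> ('a \<times> 'a) set \<Rightarrow> bool" where
  "feasible W R \<longleftrightarrow> ranking R \<and> (\<exists>\<sigma>. is_strategy \<sigma> \<and> outcome \<sigma> W R)"

text \<open>P is the chair's preference; "R more aligned with P than R'".\<close>
definition more_aligned :: "('a \<times> 'a) set \<Rightarrow> ('a \<times> 'a) set \<Rightarrow> ('a \<times> 'a) set \<Rightarrow> bool" where
  "more_aligned P R R' \<longleftrightarrow> (\<forall>x y. (x, y) \<in> P \<longrightarrow> (x, y) \<in> R' \<longrightarrow> (x, y) \<in> R)"

definition unimprovable :: "('a \<times> 'a) set \<Rightarrow> ('a \<times> 'a) set \<Rightarrow> ('a \<times> 'a) set \<Rightarrow> bool" where
  "unimprovable P W R \<longleftrightarrow> ranking R \<and>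
     \<not> (\<exists>R'. R' \<noteq> R \<and> feasible W R' \<and> more_aligned P R' R)"

definition regret_free :: "('a \<times> 'a) set \<Rightarrow> (('a \<times> 'a) list \<Rightarrow> 'a \<times> 'a) \<Rightarrow> bool" where
  "regret_free P \<sigma> \<longleftrightarrow> is_strategy \<sigma> \<and>
     (\<forall>W. tournament W \<longrightarrow>
        (\<exists>R. outcome \<sigma> W R) \<and> (\<forall>R. outcome \<sigma> W R \<longrightarrow> unimprovable P W R))"

definition W_efficient :: "('a \<times> 'a) set \<Rightarrow> ('a \<times> 'a) set \<Rightarrow> ('a \<times> 'a) set \<Rightarrow> bool" where
  "W_efficient P W R \<longleftrightarrow> (\<forall>x y. (x, y) \<in> P \<longrightarrow> (x, y) \<in> W \<longrightarrow> (x, y) \<in> R)"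

definition efficient :: "('a \<times> 'a) set \<Rightarrow> (('a \<times> 'a) list \<Rightarrow> 'a \<times> 'a) \<Rightarrow> bool" where
  "efficient P \<sigma> \<longleftrightarrow> is_strategy \<sigma> \<and>
     (\<forall>W. tournament W \<longrightarrow>
        (\<exists>R. outcome \<sigma> W R) \<and> (\<forall>R. outcome \<sigma> W R \<longrightarrow> W_efficient P W R))"

end

theory Submission
  imports Defs
begin

lemma wf_min_fin:
  fixes R :: "('a::finite \<times> 'a) set"
  assumes "trans R" "irrefl R" "x \<in> A"
  obtains z where "z \<in> A" "\<And>y. (y, z) \<in> R \<Longrightarrow> y \<notin> A"
proof -
  have "acyclic R" using assms by (simp add: acyclic_irrefl)
  moreover have "finite R" by simp
  ultimately have "wf R" by (simp add: wf_iff_acyclic_if_finite)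
  then show ?thesis using that assms(3) wfE_min by metis
qed

lemma trancl_insert_trans:
  assumes "trans R"
  shows "trancl (insert (w,l) R) = R \<union> {(a,b). (a,w) \<in> R\<^sup>= \<and> (l,b) \<in> R\<^sup>=}"
  using assms by (simp add: trancl_insert rtrancl_trancl_reflcl)

lemma hist_rel_Nil[simp]: "hist_rel [] = {}" by (simp add: hist_rel_def)
lemma hist_rel_snoc[simp]: "hist_rel (h @ [q]) = trancl (insert q (hist_rel h))"
  by (simp add: hist_rel_def)

lemma trancl_insert_trancl: "trancl (insert p (trancl S)) = trancl (insert p S)"
  by (metis insert_is_Un sup_commute trancl_trancl_Un)

lemma hist_rel_set: "hist_rel h = trancl (set h)"
  by (induction h rule: rev_induct) (auto simp: trancl_insert_trancl)

lemma hist_rel_trans: "trans (hist_rel h)"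
  by (simp add: hist_rel_set)

definition safe_add :: "('a \<times> 'a) set \<Rightarrow> ('a \<times> 'a) set \<Rightarrow> 'a \<Rightarrow> 'a \<Rightarrow> bool" where
  "safe_add P R w l \<longleftrightarrow> (\<forall>a b. (a,w) \<in> R\<^sup>= \<longrightarrow> (l,b) \<in> R\<^sup>= \<longrightarrow> (a,b) \<noteq> (w,l) \<longrightarrow> (a,b) \<notin> R \<longrightarrow> (a,b) \<in> P)"

definition comp_st :: "('a \<times> 'a) set \<Rightarrow> ('a \<times> 'a) set \<Rightarrow> 'a set \<Rightarrow> bool" where
  "comp_st P R S \<longleftrightarrow> (\<forall>a b. (a,b) \<in> P \<longrightarrow> b \<in> S \<longrightarrow> a \<in> S) \<and> R \<subseteq> S \<times> S \<and>
     (\<forall>a\<in>S. \<forall>b\<in>S. a \<noteq> b \<longrightarrow> (a,b) \<in> R \<or> (b,a) \<in> R)"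

definition focus_st :: "('a \<times> 'a) set \<Rightarrow> ('a \<times> 'a) set \<Rightarrow> 'a \<Rightarrow> 'a set \<Rightarrow> bool" where
  "focus_st P R y L \<longleftrightarrow>
     (\<forall>a b. (a,y) \<in> P \<longrightarrow> (b,y) \<in> P \<longrightarrow> a \<noteq> b \<longrightarrow> (a,b) \<in> R \<or> (b,a) \<in> R) \<and>
     (\<forall>c\<in>L. (c,y) \<in> P) \<and>
     (\<forall>c\<in>L. \<forall>d. (d,y) \<in> P \<longrightarrow> (c,d) \<in> R \<longrightarrow> d \<in> L) \<and>
     (\<forall>a b. (a,b) \<in> R \<longleftrightarrow> ((a,y) \<in> P \<and> (b,y) \<in> P \<and> (a,b) \<in> R) \<or> (a = y \<and> b \<in> L))"

definition inv_st :: "('a \<times> 'a) set \<Rightarrow> ('a \<times> 'a) set \<Rightarrow> bool" where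
  "inv_st P R \<longleftrightarrow> (\<exists>S. comp_st P R S) \<or> (\<exists>y L. focus_st P R y L)"

lemma focus_step:
  assumes rk: "ranking P" and tr: "trans R" and ir: "irrefl R" and F: "focus_st P R y L"
    and xT: "(x,y) \<in> P" and xL: "x \<notin> L"
    and xmin: "\<And>z. (z,y) \<in> P \<Longrightarrow> z \<notin> L \<Longrightarrow> z \<noteq> x \<Longrightarrow> (z,x) \<in> R"
  shows "unranked R (x,y)" "safe_add P R y x" "safe_add P R x y"
    "focus_st P (trancl (insert (y,x) R)) y (insert x L)"
    "comp_st P (trancl (insert (x,y) R)) (insert y {z. (z,y) \<in> P})"
proof -
  have irP: "\<And>a. (a,a) \<notin> P" and trP: "\<And>a b c. (a,b) \<in> P \<Longrightarrow> (b,c) \<in> P \<Longrightarrow> (a,c) \<in> P"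
    and toP: "\<And>a b. a \<noteq> b \<Longrightarrow> (a,b) \<in> P \<or> (b,a) \<in> P"
    using rk unfolding ranking_def proto_ranking_def irrefl_def trans_def total_on_def by blast+
  have irR: "\<And>a. (a,a) \<notin> R" using ir by (simp add: irrefl_def)
  have trR: "\<And>a b c. (a,b) \<in> R \<Longrightarrow> (b,c) \<in> R \<Longrightarrow> (a,c) \<in> R" using tr by (meson transD)
  have tot: "\<And>a b. (a,y) \<in> P \<Longrightarrow> (b,y) \<in> P \<Longrightarrow> a \<noteq> b \<Longrightarrow> (a,b) \<in> R \<or> (b,a) \<in> R"
    and LT: "\<And>c. c \<in> L \<Longrightarrow> (c,y) \<in> P"
    and Ldown: "\<And>c d. c \<in> L \<Longrightarrow> (d,y) \<in> P \<Longrightarrow> (c,d) \<in> R \<Longrightarrow> d \<in> L"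
    and Rf: "\<And>a b. (a,b) \<in> R \<longleftrightarrow> ((a,y) \<in> P \<and> (b,y) \<in> P \<and> (a,b) \<in> R) \<or> (a = y \<and> b \<in> L)"
    using F unfolding focus_st_def by blast+
  have xy: "x \<noteq> y" using xT irP by blast
  have below_x: "\<And>b. (x,b) \<in> R \<Longrightarrow> b \<in> L"
  proof -
    fix b assume xb: "(x,b) \<in> R"
    then have bT: "(b,y) \<in> P" using Rf xy by blast
    show "b \<in> L"
    proof (rule ccontr)
      assume "b \<notin> L"
      moreover have "b \<noteq> x" using xb irR by blast
      ultimately have "(b,x) \<in> R" using xmin bT by blast
      then show False using trR[OF xb] irR by blast
    qed
  qed
  have L_below_x: "\<And>b. b \<in> L \<Longrightarrow> (x,b) \<in> R"
  proof -
    fix b assume bL: "b \<in> L"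
    then have "b \<noteq> x" using xL by blast
    then have "(x,b) \<in> R \<or> (b,x) \<in> R" using tot xT LT bL by blast
    then show "(x,b) \<in> R" using Ldown bL xT xL by blast
  qed
  have noy: "\<And>a. (a,y) \<notin> R" using Rf irP LT by blast
  have yL: "\<And>b. b \<in> L \<Longrightarrow> (y,b) \<in> R" using Rf by blast
  show U: "unranked R (x,y)"
    unfolding unranked_def using xy noy Rf xL irP by auto
  show "safe_add P R y x"
    unfolding safe_add_def using noy below_x Rf by auto
  show "safe_add P R x y"
  proof (unfold safe_add_def, intro allI impI)
    fix a b assume ax: "(a,x) \<in> R\<^sup>=" and yb: "(y,b) \<in> R\<^sup>=" and ne: "(a,b) \<noteq> (x,y)" and nab: "(a,b) \<notin> R"
    have aT: "(a,y) \<in> P" using ax Rf xL xT by auto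
    have "b = y \<or> b \<in> L" using yb Rf irP by auto
    then show "(a,b) \<in> P"
    proof
      assume "b = y" then show ?thesis using aT by simp
    next
      assume "b \<in> L"
      then have "(x,b) \<in> R" by (rule L_below_x)
      then have "(a,b) \<in> R" using ax trR by auto
      then show ?thesis using nab by simp
    qed
  qed
  have st1: "trancl (insert (y,x) R) = insert (y,x) R"
    using trancl_insert_trans[OF tr, of y x] noy below_x yL by auto
  show "focus_st P (trancl (insert (y,x) R)) y (insert x L)"
    unfolding st1 focus_st_def
  proof (intro conjI)
    show "\<forall>a b. (a, y) \<in> P \<longrightarrow> (b, y) \<in> P \<longrightarrow> a \<noteq> b \<longrightarrow> (a, b) \<in> insert (y, x) R \<or> (b, a) \<in> insert (y, x) R"
      using tot by blast
    show "\<forall>c\<in>insert x L. (c, y) \<in> P" using LT xT by blast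
    have yL': "y \<notin> insert x L" using xy LT irP by blast
    show "\<forall>c\<in>insert x L. \<forall>d. (d, y) \<in> P \<longrightarrow> (c, d) \<in> insert (y, x) R \<longrightarrow> d \<in> insert x L"
      using yL' Ldown below_x by blast
    show "\<forall>a b. ((a, b) \<in> insert (y, x) R) =
          ((a, y) \<in> P \<and> (b, y) \<in> P \<and> (a, b) \<in> insert (y, x) R \<or> a = y \<and> b \<in> insert x L)"
    proof (intro allI)
      fix a b
      show "((a, b) \<in> insert (y, x) R) =
          ((a, y) \<in> P \<and> (b, y) \<in> P \<and> (a, b) \<in> insert (y, x) R \<or> a = y \<and> b \<in> insert x L)"
        using Rf[of a b] yL by blast
    qed
  qed
  have st2: "trancl (insert (x,y) R) = R \<union> {(a,b). (a,x) \<in> R\<^sup>= \<and> (y,b) \<in> R\<^sup>=}"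
    by (rule trancl_insert_trans[OF tr])
  show "comp_st P (trancl (insert (x,y) R)) (insert y {z. (z,y) \<in> P})"
    unfolding st2 comp_st_def
  proof (intro conjI)
    show "\<forall>a b. (a, b) \<in> P \<longrightarrow> b \<in> insert y {z. (z, y) \<in> P} \<longrightarrow> a \<in> insert y {z. (z, y) \<in> P}"
      by (metis insertE mem_Collect_eq insertCI trP)
    show "R \<union> {(a, b). (a, x) \<in> R\<^sup>= \<and> (y, b) \<in> R\<^sup>=} \<subseteq> insert y {z. (z, y) \<in> P} \<times> insert y {z. (z, y) \<in> P}"
    proof
      fix p assume p: "p \<in> R \<union> {(a, b). (a, x) \<in> R\<^sup>= \<and> (y, b) \<in> R\<^sup>=}"
      obtain a b where pab: "p = (a,b)" by (cases p)
      have "(a,b) \<in> R \<or> ((a, x) \<in> R\<^sup>= \<and> (y, b) \<in> R\<^sup>=)" using p pab by blast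
      then have "a \<in> insert y {z. (z, y) \<in> P} \<and> b \<in> insert y {z. (z, y) \<in> P}"
      proof
        assume "(a,b) \<in> R" then show ?thesis using Rf[of a b] LT by blast
      next
        assume h: "(a, x) \<in> R\<^sup>= \<and> (y, b) \<in> R\<^sup>="
        have "(a,y) \<in> P"
        proof (cases "a = x")
          case True then show ?thesis using xT by simp
        next
          case False then have "(a,x) \<in> R" using h by auto
          then show ?thesis using Rf[of a x] xL by blast
        qed
        moreover have "b = y \<or> b \<in> L" using h Rf[of y b] irP by auto
        ultimately show ?thesis using LT by blast
      qed
      then show "p \<in> insert y {z. (z, y) \<in> P} \<times> insert y {z. (z, y) \<in> P}" using pab by blast
    qed
    show "\<forall>a\<in>insert y {z. (z, y) \<in> P}. \<forall>b\<in>insert y {z. (z, y) \<in> P}. a \<noteq> b \<longrightarrow>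
        (a, b) \<in> R \<union> {(a, b). (a, x) \<in> R\<^sup>= \<and> (y, b) \<in> R\<^sup>=} \<or> (b, a) \<in> R \<union> {(a, b). (a, x) \<in> R\<^sup>= \<and> (y, b) \<in> R\<^sup>=}"
    proof (intro ballI impI)
      fix a b assume a: "a \<in> insert y {z. (z, y) \<in> P}" and b: "b \<in> insert y {z. (z, y) \<in> P}" and ab: "a \<noteq> b"
      have key: "\<And>c. (c,y) \<in> P \<Longrightarrow> (y,c) \<in> R \<or> (c,x) \<in> R\<^sup>="
      proof -
        fix c assume "(c,y) \<in> P"
        then show "(y,c) \<in> R \<or> (c,x) \<in> R\<^sup>=" using yL xmin by (cases "c \<in> L") auto
      qed
      show "(a, b) \<in> R \<union> {(a, b). (a, x) \<in> R\<^sup>= \<and> (y, b) \<in> R\<^sup>=} \<or> (b, a) \<in> R \<union> {(a, b). (a, x) \<in> R\<^sup>= \<and> (y, b) \<in> R\<^sup>=}"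
      proof (cases "a = y")
        case True
        then have "(b,y) \<in> P" using b ab by blast
        then show ?thesis using key[of b] True by blast
      next
        case F1: False
        then have aT: "(a,y) \<in> P" using a by blast
        show ?thesis
        proof (cases "b = y")
          case True then show ?thesis using key[OF aT] by blast
        next
          case False
          then have "(b,y) \<in> P" using b by blast
          then show ?thesis using tot[OF aT _ ab] by blast
        qed
      qed
    qed
  qed
qed

lemma rk_facts:
  assumes "ranking P"
  shows "\<And>a. (a,a) \<notin> P" "\<And>a b c. (a,b) \<in> P \<Longrightarrow> (b,c) \<in> P \<Longrightarrow> (a,c) \<in> P"
    "\<And>a b. a \<noteq> b \<Longrightarrow> (a,b) \<in> P \<or> (b,a) \<in> P" "trans P" "irrefl P"
  using assms unfolding ranking_def proto_ranking_def irrefl_def trans_def total_on_def by blast+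

lemma pbest:
  fixes P :: "('a::finite \<times> 'a) set"
  assumes "ranking P" "x \<in> A"
  shows "\<exists>y\<in>A. \<forall>z. (z,y) \<in> P \<longrightarrow> z \<notin> A"
proof -
  obtain z where "z \<in> A" "\<And>y. (y, z) \<in> P \<Longrightarrow> y \<notin> A"
    using wf_min_fin[OF rk_facts(4,5)[OF assms(1)] assms(2)] by blast
  then show ?thesis by blast
qed

lemma comp_to_focus:
  fixes P :: "('a::finite \<times> 'a) set"
  assumes rk: "ranking P" and C: "comp_st P R S" and ne: "s \<in> S" and nu: "t \<notin> S"
  shows "\<exists>y. focus_st P R y {} \<and> {z. (z,y) \<in> P} = S"
proof -
  obtain y where y: "y \<in> - S" "\<And>z. (z,y) \<in> P \<Longrightarrow> z \<notin> - S"
    using pbest[OF rk, of t "- S"] nu by blast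
  have up: "\<And>a b. (a,b) \<in> P \<Longrightarrow> b \<in> S \<Longrightarrow> a \<in> S" and sub: "R \<subseteq> S \<times> S"
    and tot: "\<And>a b. a \<in> S \<Longrightarrow> b \<in> S \<Longrightarrow> a \<noteq> b \<Longrightarrow> (a,b) \<in> R \<or> (b,a) \<in> R"
    using C unfolding comp_st_def by blast+
  have TS: "{z. (z,y) \<in> P} = S"
  proof
    show "{z. (z,y) \<in> P} \<subseteq> S" using y by blast
    show "S \<subseteq> {z. (z,y) \<in> P}"
    proof
      fix t assume t: "t \<in> S"
      then have "t \<noteq> y" using y by blast
      then have "(t,y) \<in> P \<or> (y,t) \<in> P" using rk_facts(3)[OF rk] by blast
      then show "t \<in> {z. (z,y) \<in> P}" using up t y by blast
    qed
  qed
  have "focus_st P R y {}"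
    unfolding focus_st_def using TS tot sub by blast
  then show ?thesis using TS by blast
qed

lemma comp_empty:
  fixes P :: "('a::finite \<times> 'a) set"
  assumes rk: "ranking P" and C: "comp_st P R {}"
  shows "\<exists>y. comp_st P R {y}"
proof -
  obtain y where y: "\<And>z. (z,y) \<in> P \<Longrightarrow> z \<notin> UNIV"
    using pbest[OF rk, of undefined UNIV] by blast
  have "R = {}" using C unfolding comp_st_def by blast
  then have "comp_st P R {y}" unfolding comp_st_def using y by blast
  then show ?thesis by blast
qed

lemma focus_full:
  assumes rk: "ranking P" and F: "focus_st P R y {z. (z,y) \<in> P}"
  shows "comp_st P R (insert y {z. (z,y) \<in> P})"
proof -
  have tot: "\<And>a b. (a,y) \<in> P \<Longrightarrow> (b,y) \<in> P \<Longrightarrow> a \<noteq> b \<Longrightarrow> (a,b) \<in> R \<or> (b,a) \<in> R"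
    and Rf: "\<And>a b. (a,b) \<in> R \<longleftrightarrow> ((a,y) \<in> P \<and> (b,y) \<in> P \<and> (a,b) \<in> R) \<or> (a = y \<and> (b,y) \<in> P)"
    using F unfolding focus_st_def by blast+
  show ?thesis unfolding comp_st_def
  proof (intro conjI)
    show "\<forall>a b. (a, b) \<in> P \<longrightarrow> b \<in> insert y {z. (z, y) \<in> P} \<longrightarrow> a \<in> insert y {z. (z, y) \<in> P}"
      using rk_facts(2)[OF rk] by blast
    show "R \<subseteq> insert y {z. (z, y) \<in> P} \<times> insert y {z. (z, y) \<in> P}"
    proof (rule subrelI)
      fix a b assume "(a,b) \<in> R"
      then show "(a,b) \<in> insert y {z. (z, y) \<in> P} \<times> insert y {z. (z, y) \<in> P}"
        using Rf[of a b] by blast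
    qed
    show "\<forall>a\<in>insert y {z. (z, y) \<in> P}. \<forall>b\<in>insert y {z. (z, y) \<in> P}. a \<noteq> b \<longrightarrow> (a, b) \<in> R \<or> (b, a) \<in> R"
      using tot Rf by blast
  qed
qed

lemma comp_total: "comp_st P R UNIV \<Longrightarrow> total R"
  unfolding comp_st_def total_on_def by blast

lemma progress_comp:
  fixes P :: "('a::finite \<times> 'a) set"
  assumes rk: "ranking P" and C: "comp_st P R S" and s: "s \<in> S" and nt: "\<not> total R"
  shows "\<exists>y L. focus_st P R y L \<and> (\<exists>x. (x,y) \<in> P \<and> x \<notin> L)"
proof -
  have "S \<noteq> UNIV" using comp_total C nt by blast
  then obtain t where "t \<notin> S" by blast
  then obtain y where "focus_st P R y {}" "{z. (z,y) \<in> P} = S"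
    using comp_to_focus[OF rk C s] by blast
  then show ?thesis using s by blast
qed

lemma progress:
  fixes P :: "('a::finite \<times> 'a) set"
  assumes rk: "ranking P" and I: "inv_st P R" and nt: "\<not> total R"
  shows "\<exists>y L. focus_st P R y L \<and> (\<exists>x. (x,y) \<in> P \<and> x \<notin> L)" (is ?G)
proof -
  have cs: "\<And>S. comp_st P R S \<Longrightarrow> ?G"
  proof -
    fix S assume C: "comp_st P R S"
    show ?G
    proof (cases "S = {}")
      case True
      then obtain y where "comp_st P R {y}" using comp_empty[OF rk] C by blast
      then show ?G using progress_comp[OF rk _ _ nt] by blast
    next
      case False
      then show ?G using progress_comp[OF rk C _ nt] by blast
    qed
  qed
  show ?thesis
  proof (cases "\<exists>S. comp_st P R S")
    case True then show ?thesis using cs by blast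
  next
    case False
    then obtain y L where F: "focus_st P R y L" using I unfolding inv_st_def by blast
    show ?thesis
    proof (cases "\<exists>x. (x,y) \<in> P \<and> x \<notin> L")
      case True then show ?thesis using F by blast
    next
      case False
      then have "L = {z. (z,y) \<in> P}" using F unfolding focus_st_def by blast
      then have "comp_st P R (insert y {z. (z,y) \<in> P})" using focus_full[OF rk] F by simp
      then show ?thesis using cs by blast
    qed
  qed
qed

definition good :: "('a \<times> 'a) set \<Rightarrow> ('a \<times> 'a) set \<Rightarrow> 'a \<times> 'a \<Rightarrow> bool" where
  "good P R p \<longleftrightarrow> unranked R p \<and> safe_add P R (fst p) (snd p) \<and> safe_add P R (snd p) (fst p) \<and>
     inv_st P (trancl (insert p R)) \<and> inv_st P (trancl (insert (snd p, fst p) R))"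

lemma exists_good:
  fixes P :: "('a::finite \<times> 'a) set"
  assumes rk: "ranking P" and tr: "trans R" and ir: "irrefl R" and I: "inv_st P R" and nt: "\<not> total R"
  shows "\<exists>p. good P R p"
proof -
  obtain y L x0 where F: "focus_st P R y L" and x0: "(x0,y) \<in> P" "x0 \<notin> L"
    using progress[OF rk I nt] by blast
  have tot: "\<And>a b. (a,y) \<in> P \<Longrightarrow> (b,y) \<in> P \<Longrightarrow> a \<noteq> b \<Longrightarrow> (a,b) \<in> R \<or> (b,a) \<in> R"
    using F unfolding focus_st_def by blast
  have "trans (R\<inverse>)" using tr by simp
  moreover have "irrefl (R\<inverse>)" using ir by (simp add: irrefl_def)
  ultimately obtain x where x: "x \<in> {z. (z,y) \<in> P \<and> z \<notin> L}"
    and xm: "\<And>z. (z,x) \<in> R\<inverse> \<Longrightarrow> z \<notin> {z. (z,y) \<in> P \<and> z \<notin> L}"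
    using wf_min_fin[of "R\<inverse>" x0 "{z. (z,y) \<in> P \<and> z \<notin> L}"] x0 by blast
  have xmin: "\<And>z. (z,y) \<in> P \<Longrightarrow> z \<notin> L \<Longrightarrow> z \<noteq> x \<Longrightarrow> (z,x) \<in> R"
    using tot x xm by blast
  have xT: "(x,y) \<in> P" and xL: "x \<notin> L" using x by auto
  note fs = focus_step[OF rk tr ir F xT xL xmin]
  have "good P R (x,y)"
    unfolding good_def inv_st_def using fs by auto
  then show ?thesis by blast
qed

definition strat :: "('a \<times> 'a) set \<Rightarrow> ('a \<times> 'a) list \<Rightarrow> 'a \<times> 'a" where
  "strat P h = (let R = hist_rel h in
     if \<exists>p. good P R p then (SOME p. good P R p) else (SOME p. unranked R p))"

lemma not_total_unranked: "\<not> total R \<Longrightarrow> \<exists>p. unranked R p"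
  unfolding total_on_def unranked_def by auto

lemma strat_unranked:
  assumes "\<not> total (hist_rel h)"
  shows "unranked (hist_rel h) (strat P h)"
proof (cases "\<exists>p. good P (hist_rel h) p")
  case True
  then have "good P (hist_rel h) (SOME p. good P (hist_rel h) p)" by (rule someI_ex)
  then show ?thesis using True unfolding strat_def good_def by (simp add: Let_def)
next
  case False
  have "unranked (hist_rel h) (SOME p. unranked (hist_rel h) p)"
    using not_total_unranked[OF assms] by (rule someI_ex)
  then show ?thesis using False unfolding strat_def by (simp add: Let_def)
qed

lemma strat_good:
  assumes "\<exists>p. good P (hist_rel h) p"
  shows "good P (hist_rel h) (strat P h)"
proof -
  have "good P (hist_rel h) (SOME p. good P (hist_rel h) p)" using assms by (rule someI_ex)
  then show ?thesis using assms unfolding strat_def by (simp add: Let_def)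
qed

lemma strat_is: "is_strategy (strat P)"
  unfolding is_strategy_def using strat_unranked by blast

definition effinv :: "('a \<times> 'a) set \<Rightarrow> ('a \<times> 'a) set \<Rightarrow> ('a \<times> 'a) set \<Rightarrow> bool" where
  "effinv P W R \<longleftrightarrow> (\<forall>a b. (a,b) \<in> R \<longrightarrow> (b,a) \<in> P \<longrightarrow> (a,b) \<in> W)"

lemma wl_cases: "winner_loser W p = p \<or> winner_loser W p = (snd p, fst p)"
  unfolding winner_loser_def by auto

lemma wl_in:
  assumes "tournament W" "fst p \<noteq> snd p"
  shows "winner_loser W p \<in> W"
  using assms unfolding winner_loser_def tournament_def total_on_def
  by (cases p) auto

lemma unranked_swap: "unranked R (snd p, fst p) \<longleftrightarrow> unranked R p"
  unfolding unranked_def by auto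

lemma irrefl_step:
  assumes "trans R" "irrefl R" "unranked R (w,l)"
  shows "irrefl (trancl (insert (w,l) R))"
proof -
  have "\<And>a. (a,a) \<notin> R \<union> {(a,b). (a,w) \<in> R\<^sup>= \<and> (l,b) \<in> R\<^sup>=}"
  proof
    fix a assume "(a,a) \<in> R \<union> {(a,b). (a,w) \<in> R\<^sup>= \<and> (l,b) \<in> R\<^sup>=}"
    moreover have "(a,a) \<notin> R" using assms(2) by (simp add: irrefl_def)
    ultimately have "(a,w) \<in> R\<^sup>=" "(l,a) \<in> R\<^sup>=" by auto
    then have "(l,w) \<in> R\<^sup>=" using assms(1) unfolding trans_def by blast
    then show False using assms(3) unfolding unranked_def by auto
  qed
  then show ?thesis using trancl_insert_trans[OF assms(1)] by (simp add: irrefl_def)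
qed

lemma effinv_step:
  assumes rk: "ranking P" and tr: "trans R" and E: "effinv P W R" and qW: "(w,l) \<in> W"
    and S: "safe_add P R w l"
  shows "effinv P W (trancl (insert (w,l) R))"
  unfolding effinv_def trancl_insert_trans[OF tr]
proof (intro allI impI)
  fix a b assume ab: "(a,b) \<in> R \<union> {(a, b). (a, w) \<in> R\<^sup>= \<and> (l, b) \<in> R\<^sup>=}" and ba: "(b,a) \<in> P"
  show "(a,b) \<in> W"
  proof (cases "(a,b) \<in> R")
    case True then show ?thesis using E ba unfolding effinv_def by blast
  next
    case False
    show ?thesis
    proof (cases "(a,b) = (w,l)")
      case True then show ?thesis using qW by simp
    next
      case F2: False
      then have "(a,b) \<in> P" using S ab False unfolding safe_add_def by blast
      then show ?thesis using ba rk_facts(1,2)[OF rk] by blast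
    qed
  qed
qed

lemma play_Suc_total: "total (hist_rel (play \<sigma> W n)) \<Longrightarrow> play \<sigma> W (Suc n) = play \<sigma> W n"
  by (simp add: Let_def)

lemma play_Suc_nt: "\<not> total (hist_rel (play \<sigma> W n)) \<Longrightarrow>
  play \<sigma> W (Suc n) = play \<sigma> W n @ [winner_loser W (\<sigma> (play \<sigma> W n))]"
  by (simp add: Let_def)

lemma play_inv:
  fixes P :: "('a::finite \<times> 'a) set"
  assumes rk: "ranking P" and tw: "tournament W"
  shows "trans (hist_rel (play (strat P) W n)) \<and> irrefl (hist_rel (play (strat P) W n)) \<and>
    inv_st P (hist_rel (play (strat P) W n)) \<and> effinv P W (hist_rel (play (strat P) W n)) \<and>
    (total (hist_rel (play (strat P) W n)) \<or> n \<le> card (hist_rel (play (strat P) W n)))"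
proof (induction n)
  case 0
  have "comp_st P {} {}" unfolding comp_st_def by blast
  then show ?case unfolding inv_st_def effinv_def by (auto simp: irrefl_def)
next
  case (Suc n)
  define h where "h = play (strat P) W n"
  define R where "R = hist_rel h"
  have IH: "trans R" "irrefl R" "inv_st P R" "effinv P W R" "total R \<or> n \<le> card R"
    using Suc.IH unfolding R_def h_def by blast+
  show ?case
  proof (cases "total R")
    case True
    then show ?thesis using Suc.IH play_Suc_total[of "strat P" W n] unfolding R_def h_def by simp
  next
    case nt: False
    have g: "good P R (strat P h)"
      using strat_good exists_good[OF rk IH(1,2,3) nt] unfolding R_def by blast
    obtain x y where p: "strat P h = (x,y)" by (cases "strat P h")
    define q where "q = winner_loser W (x,y)"
    have ps: "play (strat P) W (Suc n) = h @ [q]"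
      using play_Suc_nt[of "strat P" W n] nt p unfolding q_def R_def h_def by simp
    have hq: "hist_rel (play (strat P) W (Suc n)) = trancl (insert q R)"
      unfolding ps R_def by simp
    have ur: "unranked R (x,y)" using g p unfolding good_def by simp
    have qc: "q = (x,y) \<or> q = (y,x)" using wl_cases[of W "(x,y)"] unfolding q_def by simp
    obtain w l where wl: "q = (w,l)" by (cases q)
    have urq: "unranked R (w,l)" using qc ur wl unranked_swap[of R "(x,y)"] by auto
    have sq: "safe_add P R w l" and iq: "inv_st P (trancl (insert (w,l) R))"
      using g p qc wl unfolding good_def by auto
    have qW: "(w,l) \<in> W" using wl_in[OF tw, of "(x,y)"] ur wl unfolding q_def unranked_def by simp
    have c1: "trans (trancl (insert (w,l) R))" by simp
    have c2: "irrefl (trancl (insert (w,l) R))" using irrefl_step[OF IH(1,2) urq] .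
    have c4: "effinv P W (trancl (insert (w,l) R))" using effinv_step[OF rk IH(1) IH(4) qW sq] .
    have "R \<subset> trancl (insert (w,l) R)" using urq unfolding unranked_def by auto
    then have "card R < card (trancl (insert (w,l) R))" by (simp add: psubset_card_mono)
    then have c5: "Suc n \<le> card (trancl (insert (w,l) R))" using IH(5) nt by simp
    show ?thesis unfolding hq wl using c1 c2 iq c4 c5 by blast
  qed
qed

lemma play_terminates:
  fixes P :: "('a::finite \<times> 'a) set"
  assumes rk: "ranking P" and tw: "tournament W"
  shows "\<exists>n. total (hist_rel (play (strat P) W n))"
proof (rule ccontr)
  assume "\<not> ?thesis"
  then have nt: "\<not> total (hist_rel (play (strat P) W (Suc (card (UNIV :: ('a \<times> 'a) set)))))" by blast
  have "card (hist_rel (play (strat P) W (Suc (card (UNIV :: ('a \<times> 'a) set))))) \<le> card (UNIV :: ('a \<times> 'a) set)"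
    by (rule card_mono) auto
  then show False using play_inv[OF rk tw, of "Suc (card (UNIV :: ('a \<times> 'a) set))"] nt by simp
qed

lemma play_set_wl: "q \<in> set (play \<sigma> W n) \<Longrightarrow> \<exists>p. q = winner_loser W p"
  apply (induction n)
   apply (auto simp: Let_def split: if_splits)
  by (metis prod.collapse)

lemma rf_core:
  assumes rk: "ranking P" and tw: "tournament W" and rR: "ranking R"
    and ef: "W_efficient P W R" and fe: "feasible W R'" and ma: "more_aligned P R' R"
  shows "R' = R"
proof (rule ccontr)
  assume ne: "R' \<noteq> R"
  obtain \<sigma> n where R': "R' = hist_rel (play \<sigma> W n)" and rR': "ranking R'"
    using fe unfolding feasible_def outcome_def by blast
  define S where "S = set (play \<sigma> W n)"
  have RS: "R' = trancl S" using R' unfolding S_def by (simp add: hist_rel_set)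
  have irR': "\<And>a. (a,a) \<notin> R'" and trR': "trans R'" and toR': "\<And>a b. a \<noteq> b \<Longrightarrow> (a,b) \<in> R' \<or> (b,a) \<in> R'"
    using rk_facts[OF rR'] by blast+
  have irR: "\<And>a. (a,a) \<notin> R" and trR: "trans R" and toR: "\<And>a b. a \<noteq> b \<Longrightarrow> (a,b) \<in> R \<or> (b,a) \<in> R"
    using rk_facts[OF rR] by blast+
  have SW: "S \<subseteq> W"
  proof
    fix q assume q: "q \<in> S"
    then obtain p where qp: "q = winner_loser W p" using play_set_wl unfolding S_def by blast
    have "q \<in> R'" using q RS by (simp add: r_into_trancl')
    then have "fst q \<noteq> snd q" using irR' by (cases q) auto
    then have "fst p \<noteq> snd p" using qp wl_cases[of W p] by auto
    then show "q \<in> W" using wl_in[OF tw] qp by simp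
  qed
  have "\<exists>y x. (y,x) \<in> S \<and> (x,y) \<in> R"
  proof (rule ccontr)
    assume "\<not> ?thesis"
    then have "S \<subseteq> R"
    proof (intro subrelI)
      fix u v assume nx: "\<not> (\<exists>y x. (y, x) \<in> S \<and> (x, y) \<in> R)" and uv: "(u,v) \<in> S"
      then have "(u,v) \<in> R'" using RS by (simp add: r_into_trancl')
      then have "u \<noteq> v" using irR' by auto
      then show "(u,v) \<in> R" using toR nx uv by blast
    qed
    then have sub: "R' \<subseteq> R" using RS trR by (metis trancl_id trancl_mono_subset)
    have "R \<subseteq> R'"
    proof (rule subrelI)
      fix a b assume ab: "(a,b) \<in> R"
      show "(a,b) \<in> R'"
      proof (rule ccontr)
        assume "(a,b) \<notin> R'"
        moreover have "a \<noteq> b" using ab irR by auto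
        ultimately have "(b,a) \<in> R" using toR' sub by blast
        then show False using ab trR irR by (meson transD)
      qed
    qed
    then show False using sub ne by blast
  qed
  then obtain y x where yxS: "(y,x) \<in> S" and xyR: "(x,y) \<in> R" by blast
  have yxW: "(y,x) \<in> W" using yxS SW by blast
  have yxR': "(y,x) \<in> R'" using yxS RS by (simp add: r_into_trancl')
  have xy: "x \<noteq> y" using xyR irR by auto
  then have "(x,y) \<in> P \<or> (y,x) \<in> P" using rk_facts(3)[OF rk] by blast
  then show False
  proof
    assume "(x,y) \<in> P"
    then have "(x,y) \<in> R'" using ma xyR unfolding more_aligned_def by blast
    then show False using yxR' trR' irR' by (meson transD)
  next
    assume "(y,x) \<in> P"
    then have "(y,x) \<in> R" using ef yxW unfolding W_efficient_def by blast
    then show False using xyR trR irR by (meson transD)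
  qed
qed

lemma strat_outcome:
  fixes P :: "('a::finite \<times> 'a) set"
  assumes rk: "ranking P" and tw: "tournament W" and oc: "outcome (strat P) W R"
  shows "ranking R \<and> W_efficient P W R"
proof -
  obtain n where tot: "total (hist_rel (play (strat P) W n))" and R: "R = hist_rel (play (strat P) W n)"
    using oc unfolding outcome_def by blast
  have I: "trans R" "irrefl R" "effinv P W R" using play_inv[OF rk tw, of n] R by blast+
  have rR: "ranking R" unfolding ranking_def proto_ranking_def using I tot R by simp
  have "W_efficient P W R" unfolding W_efficient_def
  proof (intro allI impI)
    fix x y assume xyP: "(x,y) \<in> P" and xyW: "(x,y) \<in> W"
    have xy: "x \<noteq> y" using xyP rk_facts(1)[OF rk] by blast
    have "(y,x) \<notin> R"
    proof
      assume "(y,x) \<in> R"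
      then have "(y,x) \<in> W" using I(3) xyP unfolding effinv_def by blast
      then show False using xyW tw unfolding tournament_def by (meson asymD)
    qed
    then show "(x,y) \<in> R" using tot R xy unfolding total_on_def by blast
  qed
  then show ?thesis using rR by blast
qed

theorem corollary2:
  fixes P :: "('a::finite \<times> 'a) set"
  assumes "ranking P"
  shows "\<exists>\<sigma>. efficient P \<sigma> \<and> regret_free P \<sigma>"
proof (intro exI conjI)
  have ex: "\<And>W. tournament W \<Longrightarrow> \<exists>R. outcome (strat P) W R"
    unfolding outcome_def using play_terminates[OF assms] by blast
  show "efficient P (strat P)"
    unfolding efficient_def using strat_is ex strat_outcome[OF assms] by blast
  show "regret_free P (strat P)"
    unfolding regret_free_def unimprovable_def
    using strat_is ex strat_outcome[OF assms] rf_core[OF assms] by blast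
qed

end
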